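(* Let $p\ge 1$ and let $u,v,w\in E^p$. Then for every $\alpha\in[0,1]$, $$D(\alpha u+(1-\alpha)v,\,w)\le \sqrt{2}\,\max\{D(u,w),D(v,w)\}.$$
   Context: A fuzzy subset of $\mathbb{R}^p$ is a function $u:\mathbb{R}^p\to[0,1]$. Its $\alpha$-cut is $[u]_\alpha=\{x\in\mathbb{R}^p: u(x)\ge\alpha\}$ for $\alpha\in(0,1]$, and $[u]_0=\overline{\{x\in\mathbb{R}^p: u(x)>0\}}$. The set $E^p$ of $p$-dimensional fuzzy numbers consists of all fuzzy subsets $u$ of $\mathbb{R}^p$ such that $[u]_\alpha$ is a nonempty compact convex subset of $\mathbb{R}^p$ for every $\alpha\in[0,1]$. For $u,v\in E^p$ and $r\in\mathbb{R}$, $u+v$ and $r\cdot u$ are the elements of $E^p$ determined by $[u+v]_\alpha=\{x+y: x\in[u]_\alpha,\ y\in[v]_\alpha\}$ and $[r\cdot u]_\alpha=\{rx: x\in[u]_\alpha\}$ for all $\alpha\in[0,1]$. The sendograph of $u\in E^p$ is $\mathrm{send}\,u=\{(x,\alpha)\in[u]_0\times[0,1]: u(x)\ge\alpha\}\subset\mathbb{R}^{p+1}$. For nonempty compact $U,V\subset\mathbb{R}^{p+1}$ (with the Euclidean metric $d$), the Hausdorff metric is $H(U,V)=\max\{H^*(U,V),H^*(V,U)\}$ with $H^*(U,V)=\sup_{a\in U}\inf_{b\in V}d(a,b)$. The sendograph metric on $E^p$ is $D(u,v)=H(\mathrm{send}\,u,\mathrm{send}\,v)$. *)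

theory Defs
  imports "HOL-Analysis.Analysis"
begin

text \<open>R^p is modelled by an arbitrary Euclidean space 'a (dimension DIM('a) \<ge> 1).
  Fuzzy subsets are functions 'a \<Rightarrow> real with values in [0,1].\<close>

definition alpha_cut :: "('a::euclidean_space \<Rightarrow> real) \<Rightarrow> real \<Rightarrow> 'a set" where
  "alpha_cut u \<alpha> = (if \<alpha> = 0 then closure {x. u x > 0} else {x. u x \<ge> \<alpha>})"

definition fuzzy_numbers :: "('a::euclidean_space \<Rightarrow> real) set" where
  "fuzzy_numbers = {u. (\<forall>x. 0 \<le> u x \<and> u x \<le> 1) \<and>
     (\<forall>\<alpha>\<in>{0..1}. alpha_cut u \<alpha> \<noteq> {} \<and> compact (alpha_cut u \<alpha>) \<and> convex (alpha_cut u \<alpha>))}"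

definition fuzzy_add :: "('a::euclidean_space \<Rightarrow> real) \<Rightarrow> ('a \<Rightarrow> real) \<Rightarrow> ('a \<Rightarrow> real)" where
  "fuzzy_add u v = (THE w. w \<in> fuzzy_numbers \<and>
     (\<forall>\<alpha>\<in>{0..1}. alpha_cut w \<alpha> = {x + y | x y. x \<in> alpha_cut u \<alpha> \<and> y \<in> alpha_cut v \<alpha>}))"

definition fuzzy_scale :: "real \<Rightarrow> ('a::euclidean_space \<Rightarrow> real) \<Rightarrow> ('a \<Rightarrow> real)" where
  "fuzzy_scale r u = (THE w. w \<in> fuzzy_numbers \<and>
     (\<forall>\<alpha>\<in>{0..1}. alpha_cut w \<alpha> = {r *\<^sub>R x | x. x \<in> alpha_cut u \<alpha>}))"

definition sendograph :: "('a::euclidean_space \<Rightarrow> real) \<Rightarrow> ('a \<times> real) set" where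
  "sendograph u = {(x, \<alpha>). x \<in> alpha_cut u 0 \<and> \<alpha> \<in> {0..1} \<and> u x \<ge> \<alpha>}"

definition hausdorff_excess :: "('b::metric_space) set \<Rightarrow> 'b set \<Rightarrow> real" where
  "hausdorff_excess U V = (SUP a\<in>U. INF b\<in>V. dist a b)"

definition hausdorff_metric :: "('b::metric_space) set \<Rightarrow> 'b set \<Rightarrow> real" where
  "hausdorff_metric U V = max (hausdorff_excess U V) (hausdorff_excess V U)"

text \<open>Sendograph metric; the product 'a \<times> real carries the Euclidean metric.\<close>
definition send_metric :: "('a::euclidean_space \<Rightarrow> real) \<Rightarrow> ('a \<Rightarrow> real) \<Rightarrow> real" where
  "send_metric u v = hausdorff_metric (sendograph u) (sendograph v)"

end

theory Submission
  imports Defs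
begin


lemma cut_mono:
  assumes "u \<in> fuzzy_numbers" "0 \<le> \<gamma>" "\<gamma> \<le> \<beta>"
  shows "alpha_cut u \<beta> \<subseteq> alpha_cut u \<gamma>"
proof (cases "\<gamma> = 0")
  case True
  show ?thesis
  proof (cases "\<beta> = 0")
    case False
    have "{x. u x \<ge> \<beta>} \<subseteq> {x. u x > 0}" using False assms by auto
    also have "\<dots> \<subseteq> closure {x. u x > 0}" by (rule closure_subset)
    finally show ?thesis using True False unfolding alpha_cut_def by simp
  qed (use True in simp)
next
  case False
  then show ?thesis using assms unfolding alpha_cut_def by auto
qed

lemma cut_pos: "0 < \<beta> \<Longrightarrow> alpha_cut u \<beta> = {x. \<beta> \<le> u x}"
  unfolding alpha_cut_def by simp

lemma fuzzy_props:
  assumes "u \<in> fuzzy_numbers" "\<beta> \<in> {0..1}"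
  shows "alpha_cut u \<beta> \<noteq> {}" "compact (alpha_cut u \<beta>)" "convex (alpha_cut u \<beta>)"
  using assms unfolding fuzzy_numbers_def by auto

lemma fuzzy_range: "u \<in> fuzzy_numbers \<Longrightarrow> 0 \<le> u x \<and> u x \<le> 1"
  unfolding fuzzy_numbers_def by auto

lemma fuzzy_lc:
  assumes "0 < \<beta>" "\<And>\<gamma>. 0 < \<gamma> \<Longrightarrow> \<gamma> < \<beta> \<Longrightarrow> x \<in> alpha_cut u \<gamma>"
  shows "x \<in> alpha_cut u \<beta>"
proof (rule ccontr)
  assume "x \<notin> alpha_cut u \<beta>"
  then have lt: "u x < \<beta>" using assms(1) by (auto simp: cut_pos)
  define \<gamma> where "\<gamma> = (max (u x) 0 + \<beta>) / 2"
  have "0 < \<gamma>" "\<gamma> < \<beta>" "u x < \<gamma>" using lt assms(1) by (auto simp: \<gamma>_def)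
  with assms(2)[of \<gamma>] show False by (auto simp: cut_pos)
qed

lemma fuzzy_c0:
  assumes "u \<in> fuzzy_numbers"
  shows "alpha_cut u 0 = closure (\<Union>\<beta>\<in>{0<..1}. alpha_cut u \<beta>)"
proof -
  have "{x. u x > 0} = (\<Union>\<beta>\<in>{0<..1}. alpha_cut u \<beta>)"
    using fuzzy_range[OF assms] by (fastforce simp: cut_pos)
  then show ?thesis by (simp add: alpha_cut_def)
qed

lemma fuzzy_eq:
  assumes "u \<in> fuzzy_numbers" "u' \<in> fuzzy_numbers"
    and "\<forall>\<beta>\<in>{0..1}. alpha_cut u \<beta> = alpha_cut u' \<beta>"
  shows "u = u'"
proof -
  have le: "u x \<le> u' x" if "u \<in> fuzzy_numbers" "u' \<in> fuzzy_numbers"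
    "\<forall>\<beta>\<in>{0..1}. alpha_cut u \<beta> = alpha_cut u' \<beta>" for u u' x
  proof (cases "u x = 0")
    case True then show ?thesis using fuzzy_range[OF that(2)] by simp
  next
    case False
    then have p: "0 < u x" "u x \<le> 1" using fuzzy_range[OF that(1), of x] by auto
    then have "x \<in> alpha_cut u (u x)" by (simp add: cut_pos)
    then have "x \<in> alpha_cut u' (u x)" using that(3) p by auto
    then show ?thesis using p by (simp add: cut_pos)
  qed
  show ?thesis
  proof
    fix x show "u x = u' x" using le[of u u' x] le[of u' u x] assms by (metis order_antisym)
  qed
qed

lemma fuzzy_of_family:
  fixes C :: "real \<Rightarrow> 'a::euclidean_space set"
  assumes ne: "\<And>\<beta>. \<beta>\<in>{0..1} \<Longrightarrow> C \<beta> \<noteq> {}"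
    and cp: "\<And>\<beta>. \<beta>\<in>{0..1} \<Longrightarrow> compact (C \<beta>)"
    and cv: "\<And>\<beta>. \<beta>\<in>{0..1} \<Longrightarrow> convex (C \<beta>)"
    and mono: "\<And>\<beta> \<gamma>. 0 < \<gamma> \<Longrightarrow> \<gamma> \<le> \<beta> \<Longrightarrow> \<beta> \<le> 1 \<Longrightarrow> C \<beta> \<subseteq> C \<gamma>"
    and lc: "\<And>\<beta> x. 0 < \<beta> \<Longrightarrow> \<beta> \<le> 1 \<Longrightarrow> (\<And>\<gamma>. 0 < \<gamma> \<Longrightarrow> \<gamma> < \<beta> \<Longrightarrow> x \<in> C \<gamma>) \<Longrightarrow> x \<in> C \<beta>"
    and c0: "C 0 = closure (\<Union>\<beta>\<in>{0<..1}. C \<beta>)"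
  shows "\<exists>w\<in>fuzzy_numbers. \<forall>\<beta>\<in>{0..1}. alpha_cut w \<beta> = C \<beta>"
proof -
  define S where "S x = insert 0 {\<beta>\<in>{0<..1}. x \<in> C \<beta>}" for x
  define w where "w x = Sup (S x)" for x
  have bdd: "bdd_above (S x)" for x by (rule bdd_aboveI[where M=1]) (auto simp: S_def)
  have Sne: "S x \<noteq> {}" for x by (simp add: S_def)
  have w0: "0 \<le> w x" for x unfolding w_def by (rule cSup_upper[OF _ bdd]) (simp add: S_def)
  have w1: "w x \<le> 1" for x unfolding w_def by (rule cSup_least[OF Sne]) (auto simp: S_def)
  have ge: "\<beta> \<le> w x" if "x \<in> C \<beta>" "0 < \<beta>" "\<beta> \<le> 1" for x \<beta>
    unfolding w_def by (rule cSup_upper[OF _ bdd]) (use that in \<open>simp add: S_def\<close>)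
  have cut: "{x. \<beta> \<le> w x} = C \<beta>" if b: "0 < \<beta>" "\<beta> \<le> 1" for \<beta>
  proof
    show "C \<beta> \<subseteq> {x. \<beta> \<le> w x}" using ge b by auto
    show "{x. \<beta> \<le> w x} \<subseteq> C \<beta>"
    proof
      fix x assume "x \<in> {x. \<beta> \<le> w x}"
      then have bw: "\<beta> \<le> w x" by simp
      show "x \<in> C \<beta>"
      proof (rule lc[OF b])
        fix \<gamma> assume g: "0 < \<gamma>" "\<gamma> < \<beta>"
        then have "\<gamma> < Sup (S x)" using bw by (simp add: w_def)
        then obtain s where s: "s \<in> S x" "\<gamma> < s" using less_cSupD[OF Sne] by blast
        then have "s \<in> {0<..1}" "x \<in> C s" using g by (auto simp: S_def)
        then show "x \<in> C \<gamma>" using mono[of \<gamma> s] g s by auto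
      qed
    qed
  qed
  have supp: "{x. 0 < w x} = (\<Union>\<beta>\<in>{0<..1}. C \<beta>)"
  proof
    show "{x. 0 < w x} \<subseteq> (\<Union>\<beta>\<in>{0<..1}. C \<beta>)"
    proof
      fix x assume "x \<in> {x. 0 < w x}"
      then have "0 < Sup (S x)" by (simp add: w_def)
      then obtain s where "s \<in> S x" "0 < s" using less_cSupD[OF Sne] by blast
      then show "x \<in> (\<Union>\<beta>\<in>{0<..1}. C \<beta>)" by (auto simp: S_def)
    qed
    show "(\<Union>\<beta>\<in>{0<..1}. C \<beta>) \<subseteq> {x. 0 < w x}"
      using ge by fastforce
  qed
  have cuts: "\<forall>\<beta>\<in>{0..1}. alpha_cut w \<beta> = C \<beta>"
  proof
    fix \<beta> :: real assume "\<beta> \<in> {0..1}"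
    then show "alpha_cut w \<beta> = C \<beta>"
      by (cases "\<beta> = 0") (auto simp: alpha_cut_def supp c0 cut[symmetric])
  qed
  have "w \<in> fuzzy_numbers"
    unfolding fuzzy_numbers_def using w0 w1 cuts ne cp cv by auto
  with cuts show ?thesis by blast
qed



lemma scale_cuts:
  assumes u: "u \<in> fuzzy_numbers"
  shows "fuzzy_scale r u \<in> fuzzy_numbers \<and>
    (\<forall>\<beta>\<in>{0..1}. alpha_cut (fuzzy_scale r u) \<beta> = (\<lambda>x. r *\<^sub>R x) ` alpha_cut u \<beta>)"
proof -
  define C where "C \<beta> = (\<lambda>x. r *\<^sub>R x) ` alpha_cut u \<beta>" for \<beta>
  have ex: "\<exists>w\<in>fuzzy_numbers. \<forall>\<beta>\<in>{0..1}. alpha_cut w \<beta> = C \<beta>"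
  proof (rule fuzzy_of_family)
    fix \<beta> :: real assume b: "\<beta> \<in> {0..1}"
    show "C \<beta> \<noteq> {}" using fuzzy_props(1)[OF u b] by (simp add: C_def)
    show "compact (C \<beta>)" using fuzzy_props(2)[OF u b] by (simp add: C_def compact_scaling)
    show "convex (C \<beta>)" using fuzzy_props(3)[OF u b] by (simp add: C_def convex_scaling)
  next
    fix \<beta> \<gamma> :: real assume "0 < \<gamma>" "\<gamma> \<le> \<beta>" "\<beta> \<le> 1"
    then show "C \<beta> \<subseteq> C \<gamma>" unfolding C_def by (intro image_mono cut_mono[OF u]) auto
  next
    fix \<beta> :: real and y assume b: "0 < \<beta>" "\<beta> \<le> 1"
      and h: "\<And>\<gamma>. 0 < \<gamma> \<Longrightarrow> \<gamma> < \<beta> \<Longrightarrow> y \<in> C \<gamma>"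
    show "y \<in> C \<beta>"
    proof (cases "r = 0")
      case True
      obtain z where z: "z \<in> alpha_cut u \<beta>" using fuzzy_props(1)[OF u, of \<beta>] b by auto
      have "y \<in> C (\<beta>/2)" using h b by auto
      then have "y = 0" using True by (auto simp: C_def)
      then show ?thesis using z True by (auto simp: C_def)
    next
      case False
      have "y /\<^sub>R r \<in> alpha_cut u \<beta>"
      proof (rule fuzzy_lc[OF b(1)])
        fix \<gamma> :: real assume "0 < \<gamma>" "\<gamma> < \<beta>"
        then have "y \<in> C \<gamma>" by (rule h)
        then show "y /\<^sub>R r \<in> alpha_cut u \<gamma>" using False by (auto simp: C_def)
      qed
      then show ?thesis using False unfolding C_def by (auto intro!: image_eqI[where x="y /\<^sub>R r"])
    qed
  next
    let ?S = "\<Union>\<beta>\<in>{0<..1}. alpha_cut u \<beta>"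
    have cl: "closure ?S = alpha_cut u 0" using fuzzy_c0[OF u] by simp
    have img: "(\<Union>\<beta>\<in>{0<..1}. C \<beta>) = (\<lambda>x. r *\<^sub>R x) ` ?S" by (auto simp: C_def)
    have cpt: "compact ((\<lambda>x. r *\<^sub>R x) ` closure ?S)"
      using fuzzy_props(2)[OF u, of 0] cl by (auto intro: compact_scaling)
    have "(\<lambda>x. r *\<^sub>R x) ` closure ?S \<subseteq> closure ((\<lambda>x. r *\<^sub>R x) ` ?S)"
      by (rule closure_linear_image_subset) (simp add: linear_scaleR)
    moreover have "closure ((\<lambda>x. r *\<^sub>R x) ` ?S) \<subseteq> (\<lambda>x. r *\<^sub>R x) ` closure ?S"
      by (rule closure_minimal) (auto intro: compact_imp_closed[OF cpt] closure_subset[THEN subsetD])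
    ultimately show "C 0 = closure (\<Union>\<beta>\<in>{0<..1}. C \<beta>)"
      unfolding img by (simp add: C_def cl[symmetric])
  qed
  have eq: "{r *\<^sub>R x |x. x \<in> alpha_cut u \<beta>} = C \<beta>" for \<beta> by (auto simp: C_def)
  have "\<exists>!w. w \<in> fuzzy_numbers \<and> (\<forall>\<beta>\<in>{0..1}. alpha_cut w \<beta> = {r *\<^sub>R x |x. x \<in> alpha_cut u \<beta>})"
    unfolding eq using ex fuzzy_eq by metis
  then have "fuzzy_scale r u \<in> fuzzy_numbers \<and> (\<forall>\<beta>\<in>{0..1}. alpha_cut (fuzzy_scale r u) \<beta> = C \<beta>)"
    unfolding fuzzy_scale_def eq by (rule theI')
  then show ?thesis by (simp add: C_def)
qed



lemma add_cuts:
  assumes a: "a \<in> fuzzy_numbers" and b: "b \<in> fuzzy_numbers"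
  shows "fuzzy_add a b \<in> fuzzy_numbers \<and>
    (\<forall>\<beta>\<in>{0..1}. alpha_cut (fuzzy_add a b) \<beta> = {x + y | x y. x \<in> alpha_cut a \<beta> \<and> y \<in> alpha_cut b \<beta>})"
proof -
  define A where "A = alpha_cut a"
  define B where "B = alpha_cut b"
  define C where "C \<beta> = {x + y | x y. x \<in> A \<beta> \<and> y \<in> B \<beta>}" for \<beta>
  have ex: "\<exists>w\<in>fuzzy_numbers. \<forall>\<beta>\<in>{0..1}. alpha_cut w \<beta> = C \<beta>"
  proof (rule fuzzy_of_family)
    fix \<beta> :: real assume bb: "\<beta> \<in> {0..1}"
    show "C \<beta> \<noteq> {}" using fuzzy_props(1)[OF a bb] fuzzy_props(1)[OF b bb] by (auto simp: C_def A_def B_def)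
    show "compact (C \<beta>)" using fuzzy_props(2)[OF a bb] fuzzy_props(2)[OF b bb]
      unfolding C_def A_def B_def by (rule compact_sums)
    have "C \<beta> = (\<Union>x\<in>A \<beta>. \<Union>y\<in>B \<beta>. {x + y})" by (auto simp: C_def)
    then show "convex (C \<beta>)" using fuzzy_props(3)[OF a bb] fuzzy_props(3)[OF b bb]
      by (simp add: A_def B_def convex_sums)
  next
    fix \<beta> \<gamma> :: real assume "0 < \<gamma>" "\<gamma> \<le> \<beta>" "\<beta> \<le> 1"
    then show "C \<beta> \<subseteq> C \<gamma>" using cut_mono[OF a, of \<gamma> \<beta>] cut_mono[OF b, of \<gamma> \<beta>]
      unfolding C_def A_def B_def by fastforce
  next
    fix \<beta> :: real and z assume bb: "0 < \<beta>" "\<beta> \<le> 1"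
      and h: "\<And>\<gamma>. 0 < \<gamma> \<Longrightarrow> \<gamma> < \<beta> \<Longrightarrow> z \<in> C \<gamma>"
    define K where "K \<gamma> = A \<gamma> \<inter> (\<lambda>x. z - x) -` B \<gamma>" for \<gamma>
    have clK: "closed (K \<gamma>)" if "0 \<le> \<gamma>" "\<gamma> \<le> 1" for \<gamma>
      unfolding K_def A_def B_def
      using fuzzy_props(2)[OF a, of \<gamma>] fuzzy_props(2)[OF b, of \<gamma>] that
      by (intro closed_Int compact_imp_closed continuous_closed_vimage) (auto intro!: continuous_intros)
    have neK: "K \<gamma> \<noteq> {}" if "0 < \<gamma>" "\<gamma> < \<beta>" for \<gamma>
      using h[OF that] by (auto simp: K_def C_def)
    have monoK: "K \<gamma>' \<subseteq> K \<gamma>" if "0 < \<gamma>" "\<gamma> \<le> \<gamma>'" for \<gamma> \<gamma>'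
      using cut_mono[OF a, of \<gamma> \<gamma>'] cut_mono[OF b, of \<gamma> \<gamma>'] that
      unfolding K_def A_def B_def by auto
    have cptS: "compact (K (\<beta>/2))"
      unfolding K_def A_def B_def
      using fuzzy_props(2)[OF a, of "\<beta>/2"] fuzzy_props(2)[OF b, of "\<beta>/2"] bb
      by (intro compact_Int_closed compact_imp_closed continuous_closed_vimage) (auto intro!: continuous_intros)
    have "K (\<beta>/2) \<inter> (\<Inter>\<gamma>\<in>{0<..<\<beta>}. K \<gamma>) \<noteq> {}"
    proof (rule compact_imp_fip_image[OF cptS])
      fix \<gamma> :: real assume "\<gamma> \<in> {0<..<\<beta>}" then show "closed (K \<gamma>)" using bb by (intro clK) auto
    next
      fix I' assume fin: "finite I'" and sub: "I' \<subseteq> {0<..<\<beta>}"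
      define m where "m = Max (insert (\<beta>/2) I')"
      have m: "m \<in> insert (\<beta>/2) I'" "\<And>g. g \<in> insert (\<beta>/2) I' \<Longrightarrow> g \<le> m"
        unfolding m_def using fin by (intro Max_in, simp_all)
      have m2: "0 < m" "m < \<beta>" using m(1) sub bb by (auto dest: subsetD)
      have "K m \<subseteq> K (\<beta>/2)" using m(2)[of "\<beta>/2"] monoK[of "\<beta>/2" m] bb by simp
      moreover have "K m \<subseteq> K i" if "i \<in> I'" for i
      proof -
        have "0 < i" using that sub by auto
        then show ?thesis using m(2)[of i] monoK[of i m] that by simp
      qed
      ultimately have "K m \<subseteq> K (\<beta>/2) \<inter> (\<Inter>i\<in>I'. K i)" by blast
      then show "K (\<beta>/2) \<inter> (\<Inter>i\<in>I'. K i) \<noteq> {}" using neK[OF m2] by blast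
    qed
    then obtain x where x0: "x \<in> (\<Inter>\<gamma>\<in>{0<..<\<beta>}. K \<gamma>)" by blast
    have x: "x \<in> K \<gamma>" if "0 < \<gamma>" "\<gamma> < \<beta>" for \<gamma> using x0 that by simp
    have xA: "x \<in> alpha_cut a \<gamma>" "z - x \<in> alpha_cut b \<gamma>" if "0 < \<gamma>" "\<gamma> < \<beta>" for \<gamma>
      using x[OF that] unfolding K_def A_def B_def by auto
    have "x \<in> A \<beta>" unfolding A_def
      by (rule fuzzy_lc[OF bb(1)]) (rule xA(1))
    moreover have "z - x \<in> B \<beta>" unfolding B_def
      by (rule fuzzy_lc[OF bb(1)]) (rule xA(2))
    moreover have "z = x + (z - x)" by simp
    ultimately show "z \<in> C \<beta>" unfolding C_def by blast
  next
    show "C 0 = closure (\<Union>\<beta>\<in>{0<..1}. C \<beta>)"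
    proof
      have "compact (A 0)" "compact (B 0)" using fuzzy_props(2)[OF a, of 0] fuzzy_props(2)[OF b, of 0]
        by (simp_all add: A_def B_def)
      then have cpt: "compact (C 0)" unfolding C_def by (rule compact_sums)
      show "closure (\<Union>\<beta>\<in>{0<..1}. C \<beta>) \<subseteq> C 0"
      proof (rule closure_minimal[OF _ compact_imp_closed[OF cpt]])
        show "(\<Union>\<beta>\<in>{0<..1}. C \<beta>) \<subseteq> C 0"
        proof (rule UN_least)
          fix \<beta> :: real assume "\<beta> \<in> {0<..1}"
          then have "A \<beta> \<subseteq> A 0" "B \<beta> \<subseteq> B 0"
            using cut_mono[OF a, of 0 \<beta>] cut_mono[OF b, of 0 \<beta>] by (auto simp: A_def B_def)
          then show "C \<beta> \<subseteq> C 0" unfolding C_def by blast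
        qed
      qed
      show "C 0 \<subseteq> closure (\<Union>\<beta>\<in>{0<..1}. C \<beta>)"
      proof
        fix z assume "z \<in> C 0"
        then obtain x y where z: "z = x + y" and x: "x \<in> closure (\<Union>\<beta>\<in>{0<..1}. A \<beta>)"
          and y: "y \<in> closure (\<Union>\<beta>\<in>{0<..1}. B \<beta>)"
          using fuzzy_c0[OF a] fuzzy_c0[OF b] by (auto simp: C_def A_def B_def)
        show "z \<in> closure (\<Union>\<beta>\<in>{0<..1}. C \<beta>)"
          unfolding closure_approachable
        proof (intro allI impI)
          fix e :: real assume e: "0 < e"
          obtain x' where x': "x' \<in> (\<Union>\<beta>\<in>{0<..1}. A \<beta>)" "dist x' x < e/2"
            using x e unfolding closure_approachable by (meson half_gt_zero)
          obtain y' where y': "y' \<in> (\<Union>\<beta>\<in>{0<..1}. B \<beta>)" "dist y' y < e/2"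
            using y e unfolding closure_approachable by (meson half_gt_zero)
          obtain \<beta>1 \<beta>2 where b1: "\<beta>1 \<in> {0<..1}" "x' \<in> A \<beta>1" and b2: "\<beta>2 \<in> {0<..1}" "y' \<in> B \<beta>2"
            using x' y' by auto
          let ?m = "min \<beta>1 \<beta>2"
          have "x' \<in> A ?m" using b1 cut_mono[OF a, of ?m \<beta>1] b2 by (auto simp: A_def)
          moreover have "y' \<in> B ?m" using b2 cut_mono[OF b, of ?m \<beta>2] b1 by (auto simp: B_def)
          ultimately have "x' + y' \<in> (\<Union>\<beta>\<in>{0<..1}. C \<beta>)" using b1 b2
            by (auto simp: C_def intro!: bexI[where x="?m"])
          moreover have "dist (x' + y') z < e"
            using dist_triangle_add[of x' y' x y] x' y' z by simp
          ultimately show "\<exists>w\<in>(\<Union>\<beta>\<in>{0<..1}. C \<beta>). dist w z < e" by blast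
        qed
      qed
    qed
  qed
  have eq: "{x + y | x y. x \<in> alpha_cut a \<beta> \<and> y \<in> alpha_cut b \<beta>} = C \<beta>" for \<beta>
    by (simp add: C_def A_def B_def)
  have "\<exists>!w. w \<in> fuzzy_numbers \<and> (\<forall>\<beta>\<in>{0..1}. alpha_cut w \<beta> = {x + y | x y. x \<in> alpha_cut a \<beta> \<and> y \<in> alpha_cut b \<beta>})"
    unfolding eq using ex fuzzy_eq by metis
  then have "fuzzy_add a b \<in> fuzzy_numbers \<and> (\<forall>\<beta>\<in>{0..1}. alpha_cut (fuzzy_add a b) \<beta> = C \<beta>)"
    unfolding fuzzy_add_def eq by (rule theI')
  then show ?thesis by (simp add: eq)
qed



lemma sq_lt_of_sqrt: "sqrt s < r \<Longrightarrow> 0 \<le> s \<Longrightarrow> s < r\<^sup>2"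
  by (metis real_sqrt_pow2 power_strict_mono real_sqrt_ge_zero zero_less_numeral)

lemma core:
  fixes x y x' y' :: "'a::real_normed_vector"
  assumes h1: "dist (x,\<beta>) (x',\<beta>1) < r" and h2: "dist (y,\<beta>) (y',\<beta>2) < r"
    and al: "0 \<le> \<alpha>" "\<alpha> \<le> 1"
  shows "dist (\<alpha> *\<^sub>R x + (1-\<alpha>) *\<^sub>R y, \<beta>) (\<alpha> *\<^sub>R x' + (1-\<alpha>) *\<^sub>R y', min \<beta>1 \<beta>2) < sqrt 2 * r"
proof -
  define a where "a = dist x x'"
  define b where "b = dist y y'"
  define c where "c = dist \<beta> \<beta>1"
  define e where "e = dist \<beta> \<beta>2"
  have ac: "a\<^sup>2 + c\<^sup>2 < r\<^sup>2" using h1 unfolding dist_Pair_Pair a_def c_def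
    by (intro sq_lt_of_sqrt) auto
  have be: "b\<^sup>2 + e\<^sup>2 < r\<^sup>2" using h2 unfolding dist_Pair_Pair b_def e_def
    by (intro sq_lt_of_sqrt) auto
  define A where "A = dist (\<alpha> *\<^sub>R x + (1-\<alpha>) *\<^sub>R y) (\<alpha> *\<^sub>R x' + (1-\<alpha>) *\<^sub>R y')"
  define E where "E = dist \<beta> (min \<beta>1 \<beta>2)"
  have "A = norm (\<alpha> *\<^sub>R (x - x') + (1-\<alpha>) *\<^sub>R (y - y'))"
    by (simp add: A_def dist_norm algebra_simps)
  also have "\<dots> \<le> norm (\<alpha> *\<^sub>R (x - x')) + norm ((1-\<alpha>) *\<^sub>R (y - y'))" by (rule norm_triangle_ineq)
  also have "\<dots> = \<alpha> * a + (1-\<alpha>) * b" using al by (simp add: a_def b_def dist_norm)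
  also have "\<dots> \<le> max a b"
  proof -
    have "\<alpha> * a \<le> \<alpha> * max a b" "(1-\<alpha>) * b \<le> (1-\<alpha>) * max a b" using al by (auto intro: mult_left_mono)
    then show ?thesis by (simp add: algebra_simps)
  qed
  finally have A1: "A \<le> max a b" .
  have E1: "E \<le> max c e" unfolding E_def c_def e_def by (simp add: dist_real_def min_def max_def)
  have A0: "0 \<le> A" "0 \<le> E" by (simp_all add: A_def E_def)
  have "A\<^sup>2 \<le> (max a b)\<^sup>2" using A1 A0 by (simp add: power_mono)
  moreover have "E\<^sup>2 \<le> (max c e)\<^sup>2" using E1 A0 by (simp add: power_mono)
  moreover have "(max a b)\<^sup>2 < r\<^sup>2"
  proof -
    have "0 \<le> c\<^sup>2" "0 \<le> e\<^sup>2" by simp_all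
    then have "a\<^sup>2 < r\<^sup>2" "b\<^sup>2 < r\<^sup>2" using ac be by linarith+
    then show ?thesis by (simp add: max_def)
  qed
  moreover have "(max c e)\<^sup>2 < r\<^sup>2"
  proof -
    have "0 \<le> a\<^sup>2" "0 \<le> b\<^sup>2" by simp_all
    then have "c\<^sup>2 < r\<^sup>2" "e\<^sup>2 < r\<^sup>2" using ac be by linarith+
    then show ?thesis by (simp add: max_def)
  qed
  ultimately have lt: "A\<^sup>2 + E\<^sup>2 < 2 * r\<^sup>2" by linarith
  have "dist (\<alpha> *\<^sub>R x + (1-\<alpha>) *\<^sub>R y, \<beta>) (\<alpha> *\<^sub>R x' + (1-\<alpha>) *\<^sub>R y', min \<beta>1 \<beta>2) = sqrt (A\<^sup>2 + E\<^sup>2)"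
    by (simp add: dist_Pair_Pair A_def E_def)
  also have "\<dots> < sqrt (2 * r\<^sup>2)" using lt by (simp add: real_sqrt_less_iff)
  also have "\<dots> = sqrt 2 * \<bar>r\<bar>" by (simp add: real_sqrt_mult)
  also have "\<dots> = sqrt 2 * r"
  proof -
    have "0 \<le> sqrt (a\<^sup>2 + c\<^sup>2)" by simp
    then have "0 \<le> r" using h1 unfolding dist_Pair_Pair a_def c_def by linarith
    then show ?thesis by simp
  qed
  finally show ?thesis .
qed



lemma send_iff:
  assumes u: "u \<in> fuzzy_numbers"
  shows "(p, \<beta>) \<in> sendograph u \<longleftrightarrow> \<beta> \<in> {0..1} \<and> p \<in> alpha_cut u \<beta>"
proof (cases "\<beta> = 0")
  case True then show ?thesis using fuzzy_range[OF u, of p] by (auto simp: sendograph_def)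
next
  case False
  show ?thesis
  proof
    assume "(p, \<beta>) \<in> sendograph u"
    then show "\<beta> \<in> {0..1} \<and> p \<in> alpha_cut u \<beta>" using False by (auto simp: sendograph_def cut_pos)
  next
    assume h: "\<beta> \<in> {0..1} \<and> p \<in> alpha_cut u \<beta>"
    then have "p \<in> alpha_cut u 0" using cut_mono[OF u, of 0 \<beta>] by auto
    then show "(p, \<beta>) \<in> sendograph u" using h False by (auto simp: sendograph_def cut_pos)
  qed
qed

lemma send_bounded:
  assumes u: "u \<in> fuzzy_numbers"
  shows "bounded (sendograph u)"
proof -
  have "sendograph u \<subseteq> alpha_cut u 0 \<times> {0..1}" by (auto simp: sendograph_def)
  moreover have "bounded (alpha_cut u 0 \<times> {0..(1::real)})"
    using fuzzy_props(2)[OF u, of 0] by (intro bounded_Times compact_imp_bounded) auto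
  ultimately show ?thesis by (rule bounded_subset[rotated])
qed

lemma send_ne:
  assumes u: "u \<in> fuzzy_numbers"
  shows "sendograph u \<noteq> {}"
proof -
  obtain p where "p \<in> alpha_cut u 0" using fuzzy_props(1)[OF u, of 0] by auto
  then have "(p, 0) \<in> sendograph u" using send_iff[OF u] by auto
  then show ?thesis by auto
qed

lemma bdd_inf:
  fixes U V :: "('b::real_normed_vector) set"
  assumes "bounded U" "bounded V" "V \<noteq> {}"
  shows "bdd_above ((\<lambda>a. INF b\<in>V. dist a b) ` U)"
proof -
  obtain b0 where b0: "b0 \<in> V" using assms(3) by auto
  obtain B where B: "\<And>x. x \<in> U \<union> V \<Longrightarrow> norm x \<le> B"
    using assms(1,2) bounded_Un bounded_iff by metis
  show ?thesis
  proof (rule bdd_aboveI2)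
    fix a assume a: "a \<in> U"
    have "(INF b\<in>V. dist a b) \<le> dist a b0"
      by (rule cINF_lower[OF _ b0]) (auto intro: bdd_belowI[where m=0])
    also have "\<dots> \<le> norm a + norm b0" by (simp add: dist_norm norm_triangle_ineq4)
    also have "\<dots> \<le> B + B"
    proof -
      have "norm a \<le> B" "norm b0 \<le> B" using B a b0 by auto
      then show ?thesis by linarith
    qed
    finally show "(INF b\<in>V. dist a b) \<le> B + B" .
  qed
qed

lemma excess_approx:
  assumes "bdd_above ((\<lambda>a. INF b\<in>V. dist a b) ` U)" "V \<noteq> {}" "a \<in> U" "0 < e"
  shows "\<exists>b\<in>V. dist a b < hausdorff_excess U V + e"
proof -
  have "(INF b\<in>V. dist a b) \<le> hausdorff_excess U V"
    unfolding hausdorff_excess_def by (rule cSUP_upper[OF assms(3,1)])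
  then have "(INF b\<in>V. dist a b) < hausdorff_excess U V + e" using assms(4) by linarith
  then obtain t where "t \<in> (\<lambda>b. dist a b) ` V" "t < hausdorff_excess U V + e"
    using cInf_lessD[of "(\<lambda>b. dist a b) ` V"] assms(2) by blast
  then show ?thesis by auto
qed

lemma excess_bound:
  fixes U V :: "('b::metric_space) set"
  assumes "U \<noteq> {}" "V \<noteq> {}" and h: "\<And>a e. a \<in> U \<Longrightarrow> 0 < e \<Longrightarrow> \<exists>b\<in>V. dist a b < K + e"
  shows "hausdorff_excess U V \<le> K"
  unfolding hausdorff_excess_def
proof (rule cSUP_least[OF assms(1)])
  fix a assume a: "a \<in> U"
  show "(INF b\<in>V. dist a b) \<le> K"
  proof (rule ccontr)
    assume "\<not> (INF b\<in>V. dist a b) \<le> K"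
    then have "0 < (INF b\<in>V. dist a b) - K" by simp
    from h[OF a this] obtain b where b: "b \<in> V" "dist a b < (INF b\<in>V. dist a b)" by auto
    have "(INF b\<in>V. dist a b) \<le> dist a b"
      by (rule cINF_lower[OF _ b(1)]) (auto intro: bdd_belowI[where m=0])
    with b show False by simp
  qed
qed

theorem corollary2p1:
  fixes u v w :: "'a::euclidean_space \<Rightarrow> real" and \<alpha> :: real
  assumes "u \<in> fuzzy_numbers" and "v \<in> fuzzy_numbers" and "w \<in> fuzzy_numbers"
    and "0 \<le> \<alpha>" and "\<alpha> \<le> 1"
  shows "send_metric (fuzzy_add (fuzzy_scale \<alpha> u) (fuzzy_scale (1 - \<alpha>) v)) w
           \<le> sqrt 2 * max (send_metric u w) (send_metric v w)"
proof -
  note u = assms(1) and v = assms(2) and w = assms(3) and al = assms(4,5)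
  define m where "m = fuzzy_add (fuzzy_scale \<alpha> u) (fuzzy_scale (1 - \<alpha>) v)"
  have su: "fuzzy_scale \<alpha> u \<in> fuzzy_numbers" and suc: "\<forall>\<beta>\<in>{0..1}. alpha_cut (fuzzy_scale \<alpha> u) \<beta> = (\<lambda>x. \<alpha> *\<^sub>R x) ` alpha_cut u \<beta>"
    using scale_cuts[OF u] by auto
  have sv: "fuzzy_scale (1-\<alpha>) v \<in> fuzzy_numbers" and svc: "\<forall>\<beta>\<in>{0..1}. alpha_cut (fuzzy_scale (1-\<alpha>) v) \<beta> = (\<lambda>x. (1-\<alpha>) *\<^sub>R x) ` alpha_cut v \<beta>"
    using scale_cuts[OF v] by auto
  have mF: "m \<in> fuzzy_numbers" and mc: "\<forall>\<beta>\<in>{0..1}. alpha_cut m \<beta> = {x + y | x y. x \<in> alpha_cut (fuzzy_scale \<alpha> u) \<beta> \<and> y \<in> alpha_cut (fuzzy_scale (1-\<alpha>) v) \<beta>}"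
    using add_cuts[OF su sv] unfolding m_def by auto
  have sm: "(z, \<beta>) \<in> sendograph m \<longleftrightarrow> \<beta> \<in> {0..1} \<and> (\<exists>x\<in>alpha_cut u \<beta>. \<exists>y\<in>alpha_cut v \<beta>. z = \<alpha> *\<^sub>R x + (1-\<alpha>) *\<^sub>R y)" for z \<beta>
  proof (cases "\<beta> \<in> {0..1}")
    case True
    then show ?thesis unfolding send_iff[OF mF] using mc suc svc by auto
  qed (auto simp: send_iff[OF mF])
  define d where "d = max (send_metric u w) (send_metric v w)"
  have bu1: "bdd_above ((\<lambda>a. INF b\<in>sendograph w. dist a b) ` sendograph u)"
    by (intro bdd_inf send_bounded send_ne u w)
  have bu2: "bdd_above ((\<lambda>a. INF b\<in>sendograph u. dist a b) ` sendograph w)"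
    by (intro bdd_inf send_bounded send_ne u w)
  have bv1: "bdd_above ((\<lambda>a. INF b\<in>sendograph w. dist a b) ` sendograph v)"
    by (intro bdd_inf send_bounded send_ne v w)
  have bv2: "bdd_above ((\<lambda>a. INF b\<in>sendograph v. dist a b) ` sendograph w)"
    by (intro bdd_inf send_bounded send_ne v w)
  have du1: "hausdorff_excess (sendograph u) (sendograph w) \<le> d"
    and du2: "hausdorff_excess (sendograph w) (sendograph u) \<le> d"
    and dv1: "hausdorff_excess (sendograph v) (sendograph w) \<le> d"
    and dv2: "hausdorff_excess (sendograph w) (sendograph v) \<le> d"
    by (auto simp: d_def send_metric_def hausdorff_metric_def)
  have s2: "0 < sqrt (2::real)" by simp
  have E1: "hausdorff_excess (sendograph m) (sendograph w) \<le> sqrt 2 * d"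
  proof (rule excess_bound[OF send_ne[OF mF] send_ne[OF w]])
    fix a :: "'a \<times> real" and e :: real assume a: "a \<in> sendograph m" and e: "0 < e"
    obtain z \<beta> where a': "a = (z, \<beta>)" by (cases a)
    from a[unfolded a' sm] obtain x y where b: "\<beta> \<in> {0..1}" and x: "x \<in> alpha_cut u \<beta>"
      and y: "y \<in> alpha_cut v \<beta>" and z: "z = \<alpha> *\<^sub>R x + (1-\<alpha>) *\<^sub>R y" by blast
    define e' where "e' = e / sqrt 2"
    have e': "0 < e'" using e by (simp add: e'_def)
    have "(x, \<beta>) \<in> sendograph u" using send_iff[OF u] b x by auto
    from excess_approx[OF bu1 send_ne[OF w] this e'] obtain b1 where
      b1: "b1 \<in> sendograph w" "dist (x, \<beta>) b1 < hausdorff_excess (sendograph u) (sendograph w) + e'" by blast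
    have "(y, \<beta>) \<in> sendograph v" using send_iff[OF v] b y by auto
    from excess_approx[OF bv1 send_ne[OF w] this e'] obtain b2 where
      b2: "b2 \<in> sendograph w" "dist (y, \<beta>) b2 < hausdorff_excess (sendograph v) (sendograph w) + e'" by blast
    obtain x' \<beta>1 where b1': "b1 = (x', \<beta>1)" by (cases b1)
    obtain y' \<beta>2 where b2': "b2 = (y', \<beta>2)" by (cases b2)
    have x': "\<beta>1 \<in> {0..1}" "x' \<in> alpha_cut w \<beta>1" using b1 b1' send_iff[OF w] by auto
    have y': "\<beta>2 \<in> {0..1}" "y' \<in> alpha_cut w \<beta>2" using b2 b2' send_iff[OF w] by auto
    let ?g = "min \<beta>1 \<beta>2"
    have g: "?g \<in> {0..1}" using x' y' by auto
    have "x' \<in> alpha_cut w ?g" "y' \<in> alpha_cut w ?g"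
      using cut_mono[OF w, of ?g \<beta>1] cut_mono[OF w, of ?g \<beta>2] x' y' by auto
    then have "\<alpha> *\<^sub>R x' + (1-\<alpha>) *\<^sub>R y' \<in> alpha_cut w ?g"
      using fuzzy_props(3)[OF w g] al unfolding convex_def by auto
    then have mem: "(\<alpha> *\<^sub>R x' + (1-\<alpha>) *\<^sub>R y', ?g) \<in> sendograph w" using send_iff[OF w] g by auto
    have "dist (x, \<beta>) (x', \<beta>1) < d + e'" using b1 b1' du1 by auto
    moreover have "dist (y, \<beta>) (y', \<beta>2) < d + e'" using b2 b2' dv1 by auto
    ultimately have "dist a (\<alpha> *\<^sub>R x' + (1-\<alpha>) *\<^sub>R y', ?g) < sqrt 2 * (d + e')"
      unfolding a' z by (rule core[OF _ _ al])
    also have "\<dots> = sqrt 2 * d + e" by (simp add: e'_def algebra_simps)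
    finally show "\<exists>b\<in>sendograph w. dist a b < sqrt 2 * d + e" using mem by blast
  qed
  have E2: "hausdorff_excess (sendograph w) (sendograph m) \<le> sqrt 2 * d"
  proof (rule excess_bound[OF send_ne[OF w] send_ne[OF mF]])
    fix a :: "'a \<times> real" and e :: real assume a: "a \<in> sendograph w" and e: "0 < e"
    obtain z \<beta> where a': "a = (z, \<beta>)" by (cases a)
    define e' where "e' = e / sqrt 2"
    have e': "0 < e'" using e by (simp add: e'_def)
    from excess_approx[OF bu2 send_ne[OF u] a e'] obtain b1 where
      b1: "b1 \<in> sendograph u" "dist a b1 < hausdorff_excess (sendograph w) (sendograph u) + e'" by blast
    from excess_approx[OF bv2 send_ne[OF v] a e'] obtain b2 where
      b2: "b2 \<in> sendograph v" "dist a b2 < hausdorff_excess (sendograph w) (sendograph v) + e'" by blast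
    obtain x' \<beta>1 where b1': "b1 = (x', \<beta>1)" by (cases b1)
    obtain y' \<beta>2 where b2': "b2 = (y', \<beta>2)" by (cases b2)
    have x': "\<beta>1 \<in> {0..1}" "x' \<in> alpha_cut u \<beta>1" using b1 b1' send_iff[OF u] by auto
    have y': "\<beta>2 \<in> {0..1}" "y' \<in> alpha_cut v \<beta>2" using b2 b2' send_iff[OF v] by auto
    let ?g = "min \<beta>1 \<beta>2"
    have g: "?g \<in> {0..1}" using x' y' by auto
    have "x' \<in> alpha_cut u ?g" "y' \<in> alpha_cut v ?g"
      using cut_mono[OF u, of ?g \<beta>1] cut_mono[OF v, of ?g \<beta>2] x' y' by auto
    then have mem: "(\<alpha> *\<^sub>R x' + (1-\<alpha>) *\<^sub>R y', ?g) \<in> sendograph m" using sm g by blast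
    have "dist (z, \<beta>) (x', \<beta>1) < d + e'" using b1 b1' du2 a' by auto
    moreover have "dist (z, \<beta>) (y', \<beta>2) < d + e'" using b2 b2' dv2 a' by auto
    ultimately have "dist (\<alpha> *\<^sub>R z + (1-\<alpha>) *\<^sub>R z, \<beta>) (\<alpha> *\<^sub>R x' + (1-\<alpha>) *\<^sub>R y', ?g) < sqrt 2 * (d + e')"
      by (rule core[OF _ _ al])
    moreover have "\<alpha> *\<^sub>R z + (1-\<alpha>) *\<^sub>R z = z" by (simp add: algebra_simps)
    ultimately have "dist a (\<alpha> *\<^sub>R x' + (1-\<alpha>) *\<^sub>R y', ?g) < sqrt 2 * (d + e')" using a' by simp
    also have "\<dots> = sqrt 2 * d + e" by (simp add: e'_def algebra_simps)
    finally show "\<exists>b\<in>sendograph m. dist a b < sqrt 2 * d + e" using mem by blast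
  qed
  have "send_metric m w \<le> sqrt 2 * d"
    using E1 E2 unfolding send_metric_def hausdorff_metric_def by simp
  then show ?thesis unfolding m_def d_def .
qed


end
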